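(* Let $p\ge1$, $n\ge1$, and $u\in X^n\setminus\{0^n\}$ with decomposition $u=0^ka_1u_1a_2u_2\cdots a_tu_t$. Let $\mathcal P^u_n=(P^n_1(u),\dots,P^n_{m_u}(u))$ be the path of cycles of $u$ in $\Gamma^p_n$. Then: (1) $m_u=t$; (2) for each $j=1,\dots,t$, writing $N_j=k+j+\sum_{\ell=1}^j|u_\ell|$, the cycle $P^n_j(u)$ is the $e_{a_j}$-cycle with vertex set $\{0,a_j\}^{N_j}a_{j+1}u_{j+1}\cdots a_tu_t$ (so in particular $P^n_t(u)=C_n^{a_t}$); (3) the sequence of lengths is $\mathcal L^u_n=(2^{N_1},2^{N_2},\dots,2^{N_t})$, with $2^{N_t}=2^n$.
   Context: $X=\{0,1,\dots,p\}$; $\mathcal G_{S_p}$ is generated by $e_1,\dots,e_p$ acting on $X^\ast$ by $e_i(0w)=i\,e_i(w)$, $e_i(iw)=0w$, $e_i(jw)=jw$ for $j\notin\{0,i\}$. $\Gamma^p_n$ is the Schreier graph on $X^n$ with an edge labelled $e_j$ joining $v$ and $e_j(v)$ for all $v,j$. An $e_j$-cycle is the $\langle e_j\rangle$-orbit of a vertex together with its $e_j$-labelled edges; $C_n^i$ is the $e_i$-cycle with vertex set $\{0,i\}^n$. Decomposition: every $u\in X^n\setminus\{0^n\}$ is uniquely written $u=0^ka_1u_1\cdots a_tu_t$ with $k\ge0$, $a_j\in\{1,\dots,p\}$, $a_{j+1}\ne a_j$, $u_j\in\{0,a_j\}^\ast$. Path of cycles: consider the bipartite graph $B_n$ whose vertices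 are the vertices of $\Gamma^p_n$ and the $e$-cycles of length $\ge2$, a vertex being joined to each such cycle containing it; $B_n$ is a tree. Removing $0^n$ from $\Gamma^p_n$ leaves $p$ components; the $i$-th petal is the one containing $C_n^i\setminus\{0^n\}$. For $u\ne0^n$ in the $i$-th petal, the path of cycles $\mathcal P^u_n=(P^n_1(u),\dots,P^n_{m_u}(u))$ is the sequence of cycles met, in order, along the unique path in $B_n$ from $u$ to $C_n^i$ (so $u\in P^n_1(u)$ and $P^n_{m_u}(u)=C_n^i$), and $\mathcal L^u_n$ is the sequence of their lengths. *)

theory Defs
  imports Main
begin

text \<open>Words over X = {0,...,p} are lists of naturals with entries at most p.
  The generator e_i acts on words as follows.\<close>

fun act :: "nat \<Rightarrow> nat list \<Rightarrow> nat list" where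
  "act i [] = []"
| "act i (x # w) = (if x = 0 then i # act i w else if x = i then 0 # w else x # w)"

definition verts :: "nat \<Rightarrow> nat \<Rightarrow> nat list set" where
  "verts p n = {w. length w = n \<and> set w \<subseteq> {0..p}}"

definition gedges :: "nat \<Rightarrow> nat \<Rightarrow> (nat list \<times> nat list) set" where
  "gedges p n = {(v, act j v) | v j. v \<in> verts p n \<and> j \<in> {1..p}}"

text \<open>The orbit of v under the cyclic group generated by e_j (e_j permutes the
  finite set X^n, so the group orbit equals the forward orbit).\<close>
definition orbit :: "nat \<Rightarrow> nat list \<Rightarrow> nat list set" where
  "orbit j v = {(act j ^^ m) v | m. True}"

text \<open>An e_j-cycle is represented by its label j together with its vertex set;
  its length is the cardinality of its vertex set. These are the e-cycles of
  length at least 2, i.e. the cycle-nodes of the bipartite graph B_n.\<close>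
definition cycles :: "nat \<Rightarrow> nat \<Rightarrow> (nat \<times> nat list set) set" where
  "cycles p n = {(j, orbit j v) | j v. j \<in> {1..p} \<and> v \<in> verts p n \<and> card (orbit j v) \<ge> 2}"

definition cyc_len :: "nat \<times> nat list set \<Rightarrow> nat" where
  "cyc_len c = card (snd c)"

definition Ccyc :: "nat \<Rightarrow> nat \<Rightarrow> nat \<times> nat list set" where
  "Ccyc n i = (i, {w. length w = n \<and> set w \<subseteq> {0, i}})"

definition petal :: "nat \<Rightarrow> nat \<Rightarrow> nat \<Rightarrow> nat list set" where
  "petal p n i =
    (let Z = replicate n 0;
         E = {(v, w). ((v, w) \<in> gedges p n \<or> (w, v) \<in> gedges p n) \<and> v \<noteq> Z \<and> w \<noteq> Z}
     in {v \<in> verts p n - {Z}. \<exists>w \<in> snd (Ccyc n i) - {Z}. (v, w) \<in> E\<^sup>*})"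

text \<open>cs is the sequence of cycles of a simple path in B_n
  u - c_1 - v_1 - c_2 - ... - v_{m-1} - c_m with c_m = D.\<close>
definition is_cycle_path ::
  "nat \<Rightarrow> nat \<Rightarrow> nat list \<Rightarrow> (nat \<times> nat list set) list \<Rightarrow> nat \<times> nat list set \<Rightarrow> bool" where
  "is_cycle_path p n u cs D \<longleftrightarrow>
     cs \<noteq> [] \<and> last cs = D \<and> distinct cs \<and> set cs \<subseteq> cycles p n \<and>
     (\<exists>vs. length vs = length cs \<and> distinct vs \<and> vs ! 0 = u \<and>
        (\<forall>l < length cs. vs ! l \<in> snd (cs ! l)) \<and>
        (\<forall>l. 0 < l \<and> l < length cs \<longrightarrow> vs ! l \<in> snd (cs ! (l - 1))))"

definition path_of_cycles :: "nat \<Rightarrow> nat \<Rightarrow> nat list \<Rightarrow> (nat \<times> nat list set) list" where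
  "path_of_cycles p n u =
     (THE cs. \<exists>i \<in> {1..p}. u \<in> petal p n i \<and> is_cycle_path p n u cs (Ccyc n i))"

end

theory Submission
  imports Defs
begin


definition pfx :: "nat \<Rightarrow> nat list \<Rightarrow> nat list" where
  "pfx j v = takeWhile (\<lambda>x. x = 0 \<or> x = j) v"
definition sfx :: "nat \<Rightarrow> nat list \<Rightarrow> nat list" where
  "sfx j v = dropWhile (\<lambda>x. x = 0 \<or> x = j) v"
definition stp :: "nat \<Rightarrow> nat list \<Rightarrow> bool" where
  "stp j s \<longleftrightarrow> (s = [] \<or> (hd s \<noteq> 0 \<and> hd s \<noteq> j))"

lemma stp_sfx: "stp j (sfx j v)"
  unfolding stp_def sfx_def using hd_dropWhile[of "\<lambda>x. x = 0 \<or> x = j" v] by auto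

lemma pfx_sfx: "pfx j v @ sfx j v = v"
  unfolding pfx_def sfx_def by simp

lemma pfx_set: "set (pfx j v) \<subseteq> {0, j}"
  unfolding pfx_def by (auto dest: set_takeWhileD)

lemma pfx_sfx_app:
  assumes "set w \<subseteq> {0, j}" "stp j s"
  shows "pfx j (w @ s) = w \<and> sfx j (w @ s) = s"
proof -
  have "takeWhile (\<lambda>x. x = 0 \<or> x = j) s = [] \<and> dropWhile (\<lambda>x. x = 0 \<or> x = j) s = s"
    using assms(2) unfolding stp_def by (cases s) auto
  moreover have "\<forall>x\<in>set w. x = 0 \<or> x = j" using assms(1) by auto
  ultimately show ?thesis unfolding pfx_def sfx_def
    by (simp add: takeWhile_append2 dropWhile_append2 takeWhile_eq_all_conv[THEN iffD2] dropWhile_eq_Nil_conv[THEN iffD2])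
qed

lemma act_stp: "stp j s \<Longrightarrow> act j s = s"
  unfolding stp_def by (cases s) auto

lemma act_app: "set w \<subseteq> {0, j} \<Longrightarrow> act j s = s \<Longrightarrow> act j (w @ s) = act j w @ s"
  by (induction w) auto

lemma act_length[simp]: "length (act j w) = length w"
  by (induction w) auto

lemma act_set01: "set w \<subseteq> {0, j} \<Longrightarrow> set (act j w) \<subseteq> {0, j}"
  by (induction w) auto

lemma act_set: "set (act j w) \<subseteq> set w \<union> {0, j}"
  by (induction w) auto

lemma actpow_length[simp]: "length ((act j ^^ m) w) = length w"
  by (induction m) auto

lemma actpow_set01: "set w \<subseteq> {0, j} \<Longrightarrow> set ((act j ^^ m) w) \<subseteq> {0, j}"
  by (induction m) (auto dest: act_set01)

lemma actpow_app: "set w \<subseteq> {0, j} \<Longrightarrow> act j s = s \<Longrightarrow> (act j ^^ m) (w @ s) = (act j ^^ m) w @ s"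
  by (induction m) (auto simp: act_app actpow_set01)

fun bval :: "nat list \<Rightarrow> nat" where
  "bval [] = 0"
| "bval (x # w) = (if x = 0 then 1 else 0) + 2 * bval w"

lemma bval_lt: "bval w < 2 ^ length w"
  by (induction w) auto

lemma bval_act: "set w \<subseteq> {0, j} \<Longrightarrow> j \<noteq> 0 \<Longrightarrow> bval (act j w) = (bval w + 1) mod 2 ^ length w"
proof (induction w)
  case Nil then show ?case by simp
next
  case (Cons x w)
  show ?case
  proof (cases "x = 0")
    case True
    then have "bval (act j (x # w)) = 2 * ((bval w + 1) mod 2 ^ length w)"
      using Cons by simp
    also have "\<dots> = (2 * (bval w + 1)) mod (2 * 2 ^ length w)"
      by (simp add: mult_mod_right)
    finally show ?thesis using True by simp
  next
    case False
    then have "x = j" using Cons by auto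
    then show ?thesis using False bval_lt[of w] by simp
  qed
qed

lemma bval_pow: "set w \<subseteq> {0, j} \<Longrightarrow> j \<noteq> 0 \<Longrightarrow> bval ((act j ^^ m) w) = (bval w + m) mod 2 ^ length w"
proof (induction m)
  case 0 then show ?case using bval_lt[of w] by simp
next
  case (Suc m)
  have "bval ((act j ^^ Suc m) w) = (bval ((act j ^^ m) w) + 1) mod 2 ^ length w"
    using bval_act[OF actpow_set01[OF Suc.prems(1)] Suc.prems(2), of m] by simp
  also have "\<dots> = (bval w + Suc m) mod 2 ^ length w"
    using Suc by (simp add: mod_simps)
  finally show ?case .
qed

lemma bval_inj: "length w = length w' \<Longrightarrow> set w \<subseteq> {0, j} \<Longrightarrow> set w' \<subseteq> {0, j} \<Longrightarrow> bval w = bval w' \<Longrightarrow> w = w'"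
proof (induction w arbitrary: w')
  case Nil then show ?case by simp
next
  case (Cons x w)
  then obtain y w'' where w': "w' = y # w''" by (cases w') auto
  have "bval (x # w) mod 2 = bval (y # w'') mod 2" using Cons w' by simp
  then have "(x = 0) = (y = 0)" by (auto split: if_splits)
  then have "x = y" using Cons.prems w' by auto
  then show ?case using Cons w' by auto
qed

lemma odo_trans:
  assumes "length w = length w'" "set w \<subseteq> {0, j}" "set w' \<subseteq> {0, j}" "j \<noteq> 0"
  shows "\<exists>m. (act j ^^ m) w = w'"
proof -
  define L where "L = length w"
  define m where "m = bval w' + 2 ^ L - bval w"
  have "bval w < 2 ^ L" using bval_lt L_def by simp
  then have "bval w + m = bval w' + 2 ^ L" unfolding m_def by simp
  then have "bval ((act j ^^ m) w) = bval w'"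
    using bval_pow[OF assms(2,4), of m] bval_lt[of w'] assms(1) L_def by simp
  then have "(act j ^^ m) w = w'"
    using bval_inj[of "(act j ^^ m) w" w' j] assms actpow_set01 by simp
  then show ?thesis by blast
qed

lemma orbit_char:
  assumes "j \<noteq> 0"
  shows "orbit j v = {w @ sfx j v | w. length w = length (pfx j v) \<and> set w \<subseteq> {0, j}}"
proof -
  have v: "v = pfx j v @ sfx j v" using pfx_sfx by simp
  have a: "act j (sfx j v) = sfx j v" using act_stp stp_sfx by simp
  have pw: "(act j ^^ m) v = (act j ^^ m) (pfx j v) @ sfx j v" for m
    using actpow_app[OF pfx_set a] v by metis
  show ?thesis
  proof (intro set_eqI iffI)
    fix x assume "x \<in> orbit j v"
    then obtain m where "x = (act j ^^ m) v" unfolding orbit_def by auto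
    then show "x \<in> {w @ sfx j v | w. length w = length (pfx j v) \<and> set w \<subseteq> {0, j}}"
      using pw actpow_set01[OF pfx_set] by auto
  next
    fix x assume "x \<in> {w @ sfx j v | w. length w = length (pfx j v) \<and> set w \<subseteq> {0, j}}"
    then obtain w where w: "x = w @ sfx j v" "length w = length (pfx j v)" "set w \<subseteq> {0, j}" by auto
    obtain m where "(act j ^^ m) (pfx j v) = w"
      using odo_trans[of "pfx j v" w j] w pfx_set assms by auto
    then show "x \<in> orbit j v" using pw w unfolding orbit_def by auto
  qed
qed

lemma card_orbit:
  assumes "j \<noteq> 0"
  shows "card (orbit j v) = 2 ^ length (pfx j v)"
proof -
  have "orbit j v = (\<lambda>w. w @ sfx j v) ` {w. set w \<subseteq> {0, j} \<and> length w = length (pfx j v)}"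
    using orbit_char[OF assms] by auto
  moreover have "inj (\<lambda>w. w @ sfx j v)" by (simp add: inj_def)
  ultimately have "card (orbit j v) = card {w. set w \<subseteq> {0, j} \<and> length w = length (pfx j v)}"
    by (simp add: card_image inj_on_subset)
  also have "\<dots> = 2 ^ length (pfx j v)" using card_lists_length_eq[of "{0,j}"] assms by (simp add: numeral_2_eq_2)
  finally show ?thesis .
qed

lemma orbit_same:
  assumes "j \<noteq> 0" "v' \<in> orbit j v"
  shows "orbit j v' = orbit j v"
proof -
  obtain w where w: "v' = w @ sfx j v" "length w = length (pfx j v)" "set w \<subseteq> {0, j}"
    using assms orbit_char by auto
  have "pfx j v' = w \<and> sfx j v' = sfx j v" using pfx_sfx_app[OF w(3) stp_sfx] w(1) by simp
  then show ?thesis using orbit_char[OF assms(1)] w(2) by simp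
qed

lemma orbit_length: "v' \<in> orbit j v \<Longrightarrow> length v' = length v"
  unfolding orbit_def by auto

lemma orbit_self: "v \<in> orbit j v"
  unfolding orbit_def by (auto intro: exI[of _ 0])

lemma actpow_set: "set ((act j ^^ m) w) \<subseteq> set w \<union> {0, j}"
  by (induction m) (use act_set in fastforce)+

lemma orbit_verts: "v \<in> verts p n \<Longrightarrow> j \<le> p \<Longrightarrow> orbit j v \<subseteq> verts p n"
  unfolding orbit_def verts_def using actpow_set by fastforce




definition lastnz :: "nat list \<Rightarrow> nat" where
  "lastnz v = last (filter (\<lambda>x. x \<noteq> 0) v)"
definition fnz :: "nat list \<Rightarrow> nat" where
  "fnz v = hd (dropWhile (\<lambda>x. x = 0) v)"
definition pc :: "nat list \<Rightarrow> nat \<times> nat list set" where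
  "pc v = (fnz v, orbit (fnz v) v)"
definition cbase :: "nat \<times> nat list set \<Rightarrow> nat list" where
  "cbase c = (THE v. v \<in> snd c \<and> set (pfx (fst c) v) \<subseteq> {0})"

lemma nz_conv: "length v = n \<Longrightarrow> v \<noteq> replicate n 0 \<longleftrightarrow> (\<exists>y\<in>set v. y \<noteq> 0)"
proof
  assume "length v = n" "v \<noteq> replicate n 0"
  then show "\<exists>y\<in>set v. y \<noteq> 0" using replicate_length_same[of v 0] by auto
next
  assume "\<exists>y\<in>set v. y \<noteq> 0"
  then show "v \<noteq> replicate n 0" by auto
qed

lemma lastnz_01: "set w \<subseteq> {0, j} \<Longrightarrow> \<exists>y\<in>set w. y \<noteq> 0 \<Longrightarrow> lastnz w = j"
proof -
  assume a: "set w \<subseteq> {0, j}" "\<exists>y\<in>set w. y \<noteq> 0"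
  then have "filter (\<lambda>x. x \<noteq> 0) w \<noteq> []" by (auto simp: filter_empty_conv)
  moreover have "set (filter (\<lambda>x. x \<noteq> 0) w) \<subseteq> {j}" using a by auto
  ultimately show ?thesis unfolding lastnz_def using last_in_set by blast
qed

lemma lastnz_orbit:
  assumes "j \<noteq> 0" "v \<in> orbit j x" "\<exists>y\<in>set v. y \<noteq> 0"
  shows "lastnz v = (if \<exists>y\<in>set (sfx j x). y \<noteq> 0 then lastnz (sfx j x) else j)"
proof -
  obtain w where w: "v = w @ sfx j x" "set w \<subseteq> {0, j}"
    using assms orbit_char by auto
  show ?thesis
  proof (cases "\<exists>y\<in>set (sfx j x). y \<noteq> 0")
    case True
    then have "filter (\<lambda>x. x \<noteq> 0) (sfx j x) \<noteq> []" by (auto simp: filter_empty_conv)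
    then show ?thesis using True w unfolding lastnz_def by simp
  next
    case False
    then have "lastnz v = lastnz w" using w unfolding lastnz_def
      by (simp add: filter_empty_conv[THEN iffD2])
    also have "\<dots> = j" using lastnz_01[OF w(2)] assms(3) w False by auto
    finally show ?thesis using False by simp
  qed
qed

lemma lastnz_same:
  assumes "j \<noteq> 0" "v \<in> orbit j x" "v' \<in> orbit j x" "\<exists>y\<in>set v. y \<noteq> 0" "\<exists>y\<in>set v'. y \<noteq> 0"
  shows "lastnz v = lastnz v'"
  using lastnz_orbit[OF assms(1,2,4)] lastnz_orbit[OF assms(1,3,5)] by simp

lemma lastnz_zero_orbit:
  assumes "j \<noteq> 0" "v \<in> orbit j x" "\<exists>y\<in>set v. y \<noteq> 0" "replicate n 0 \<in> orbit j x"
  shows "lastnz v = j"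
proof -
  obtain w where "replicate n 0 = w @ sfx j x" using assms orbit_char by auto
  then have "\<not> (\<exists>y\<in>set (sfx j x). y \<noteq> 0)"
    by (metis Un_iff in_set_replicate set_append)
  then show ?thesis using lastnz_orbit[OF assms(1-3)] by simp
qed

lemma zero_orbit:
  assumes "j \<noteq> 0" "replicate n 0 \<in> orbit j x" "length x = n"
  shows "orbit j x = snd (Ccyc n j)"
proof -
  obtain w where w: "replicate n 0 = w @ sfx j x" using assms orbit_char by auto
  then have "\<forall>y\<in>set (sfx j x). y = 0" by (metis Un_iff in_set_replicate set_append)
  then have "sfx j x = []" using stp_sfx[of j x] unfolding stp_def by (cases "sfx j x") auto
  then have "length (pfx j x) = n" using pfx_sfx[of j x] assms(3) by (metis append_Nil2)
  then show ?thesis using orbit_char[OF assms(1), of x] \<open>sfx j x = []\<close> unfolding Ccyc_def by auto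
qed

lemma cycles_form: "c \<in> cycles p n \<Longrightarrow> \<exists>j x. c = (j, orbit j x) \<and> j \<in> {1..p} \<and> x \<in> verts p n"
  unfolding cycles_def by auto

lemma cbase_eq:
  assumes "c \<in> cycles p n" "v \<in> snd c" "set (pfx (fst c) v) \<subseteq> {0}"
  shows "cbase c = v"
proof -
  obtain j x where c: "c = (j, orbit j x)" "j \<in> {1..p}" using cycles_form[OF assms(1)] by auto
  have j: "j \<noteq> 0" using c by auto
  have uq: "v' = v" if h: "v' \<in> orbit j x" "set (pfx j v') \<subseteq> {0}" "v \<in> orbit j x" "set (pfx j v) \<subseteq> {0}" for v v'
  proof -
    obtain w where w: "v = w @ sfx j x" "length w = length (pfx j x)" "set w \<subseteq> {0, j}"
      using h(3) orbit_char[OF j, of x] by blast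
    obtain w' where w': "v' = w' @ sfx j x" "length w' = length (pfx j x)" "set w' \<subseteq> {0, j}"
      using h(1) orbit_char[OF j, of x] by blast
    have "pfx j v = w" "pfx j v' = w'" using pfx_sfx_app[OF w(3) stp_sfx] pfx_sfx_app[OF w'(3) stp_sfx] w w' by auto
    then have "set w \<subseteq> {0}" "set w' \<subseteq> {0}" using h by auto
    then have "w = replicate (length w) 0" "w' = replicate (length w') 0"
      using replicate_length_same[of w 0] replicate_length_same[of w' 0] by force+
    then show ?thesis using w w' by metis
  qed
  show ?thesis unfolding cbase_def
    apply (rule the_equality)
    using assms c uq by auto
qed

lemma dichotomy:
  assumes "c \<in> cycles p n" "v \<in> snd c"
  shows "v = cbase c \<or> c = pc v"
proof -
  obtain j x where c: "c = (j, orbit j x)" "j \<in> {1..p}" using cycles_form[OF assms(1)] by auto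
  have j: "j \<noteq> 0" using c by auto
  obtain w where w: "v = w @ sfx j x" "length w = length (pfx j x)" "set w \<subseteq> {0, j}"
    using assms c orbit_char[OF j] by auto
  have pv: "pfx j v = w" using pfx_sfx_app[OF w(3) stp_sfx] w by auto
  show ?thesis
  proof (cases "set w \<subseteq> {0}")
    case True
    then show ?thesis using cbase_eq[OF assms] pv c by auto
  next
    case False
    then obtain y where y: "y \<in> set w" "y \<noteq> 0" by auto
    have dw: "dropWhile (\<lambda>x. x = 0) v = dropWhile (\<lambda>x. x = 0) w @ sfx j x"
      using w(1) y by simp
    have ne: "dropWhile (\<lambda>x. x = 0) w \<noteq> []" using y by (simp add: dropWhile_eq_Nil_conv) blast
    have "hd (dropWhile (\<lambda>x. x = 0) w) \<in> set w"
      using ne by (metis hd_in_set set_dropWhileD)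
    moreover have "hd (dropWhile (\<lambda>x. x = 0) w) \<noteq> 0" using hd_dropWhile[OF ne] by simp
    ultimately have "fnz v = j" using dw ne w(3) unfolding fnz_def by auto
    moreover have "orbit j v = orbit j x" using orbit_same[OF j] assms c by auto
    ultimately show ?thesis unfolding pc_def using c by auto
  qed
qed

lemma petal_lastnz:
  assumes "u \<in> petal p n i" "i \<in> {1..p}"
  shows "lastnz u = i \<and> u \<in> verts p n \<and> u \<noteq> replicate n 0"
proof -
  define Z where "Z = replicate n (0::nat)"
  define E where "E = {(v, w). ((v, w) \<in> gedges p n \<or> (w, v) \<in> gedges p n) \<and> v \<noteq> Z \<and> w \<noteq> Z}"
  have pe: "petal p n i = {v \<in> verts p n - {Z}. \<exists>w \<in> snd (Ccyc n i) - {Z}. (v, w) \<in> E\<^sup>*}"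
    unfolding petal_def Z_def E_def Let_def by simp
  obtain w where w: "w \<in> snd (Ccyc n i) - {Z}" "(u, w) \<in> E\<^sup>*" and u: "u \<in> verts p n" "u \<noteq> Z"
    using assms(1) pe by auto
  have edge: "lastnz v = lastnz y" if h: "(v, y) \<in> gedges p n" "v \<noteq> Z" "y \<noteq> Z" for v y
  proof -
    obtain j where j: "y = act j v" "v \<in> verts p n" "j \<in> {1..p}" using h(1) unfolding gedges_def by blast
    have "y \<in> orbit j v" using j unfolding orbit_def by (auto intro: exI[of _ 1])
    moreover have "length v = n" "length y = n" using j unfolding verts_def by auto
    moreover have "\<exists>x\<in>set v. x \<noteq> 0" "\<exists>x\<in>set y. x \<noteq> 0"
      using nz_conv[of v n] nz_conv[of y n] h Z_def \<open>length v = n\<close> \<open>length y = n\<close> by auto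
    ultimately show ?thesis using lastnz_same[of j v v y] orbit_self[of v j] j by auto
  qed
  have "lastnz w = i"
    using w(1) nz_conv[of w n] lastnz_01[of w i] unfolding Ccyc_def Z_def by auto
  have "lastnz v = i" if "(v, w) \<in> E\<^sup>*" for v
    using that
  proof (induction rule: converse_rtrancl_induct)
    case base then show ?case using \<open>lastnz w = i\<close> by simp
  next
    case (step y z)
    then show ?case unfolding E_def using edge by auto
  qed
  then show ?thesis using w u Z_def by auto
qed




lemma allup:
  assumes P: "is_cycle_path p n u cs (Ccyc n i)" and pet: "u \<in> petal p n i" and i: "i \<in> {1..p}"
  shows "\<exists>vs. length vs = length cs \<and> distinct vs \<and> vs ! 0 = u \<and>
           (\<forall>l<length cs. cs ! l = pc (vs ! l)) \<and>
           (\<forall>l. 0 < l \<and> l < length cs \<longrightarrow> vs ! l = cbase (cs ! (l - 1)))"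
proof -
  define m where "m = length cs"
  define Z where "Z = replicate n (0::nat)"
  obtain vs where vs: "length vs = m" "distinct vs" "vs ! 0 = u"
      "\<forall>l<m. vs ! l \<in> snd (cs ! l)" "\<forall>l. 0 < l \<and> l < m \<longrightarrow> vs ! l \<in> snd (cs ! (l - 1))"
    using P unfolding is_cycle_path_def m_def by blast
  have csne: "cs \<noteq> []" and dcs: "distinct cs" and lastcs: "last cs = Ccyc n i" and scs: "set cs \<subseteq> cycles p n"
    using P unfolding is_cycle_path_def by auto
  have m0: "m > 0" using csne m_def by auto
  have cyc: "cs ! l \<in> cycles p n" if "l < m" for l using scs that m_def nth_mem by blast
  have lastc: "cs ! (m - 1) = Ccyc n i" using lastcs csne m_def by (simp add: last_conv_nth)
  have vlen: "length (vs ! l) = n" if hl: "l < m" for l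
  proof -
    obtain j x where "cs ! l = (j, orbit j x)" "x \<in> verts p n" using cycles_form[OF cyc[OF hl]] by blast
    then show ?thesis using vs(4) hl orbit_length[of "vs ! l" j x] unfolding verts_def by auto
  qed
  have lu: "lastnz u = i" "u \<noteq> Z" using petal_lastnz[OF pet i] Z_def by auto
  have dvs: "vs ! a \<noteq> vs ! b" if "a < m" "b < m" "a \<noteq> b" for a b
    using vs(1,2) that nth_eq_iff_index_eq by metis
  have dcs': "cs ! a \<noteq> cs ! b" if "a < m" "b < m" "a \<noteq> b" for a b
    using dcs m_def that nth_eq_iff_index_eq by metis
  have notZ: "vs ! (m - 1) \<noteq> Z"
  proof
    assume H: "vs ! (m - 1) = Z"
    have m2: "m \<ge> 2" using H lu vs(3) m0 by (cases "m = 1") auto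
    have nzl: "\<exists>y\<in>set (vs ! l). y \<noteq> 0" if "l < m - 1" for l
      using dvs[of l "m - 1"] that H nz_conv[of "vs ! l" n] vlen[of l] Z_def by auto
    have chain: "lastnz (vs ! l) = i" if "l \<le> m - 2" for l
      using that
    proof (induction l)
      case 0 then show ?case using vs(3) lu by simp
    next
      case (Suc l)
      obtain j x where c: "cs ! l = (j, orbit j x)" "j \<in> {1..p}"
      proof -
        have "l < m" using Suc.prems m2 by auto
        then show ?thesis using that cycles_form[OF cyc[of l]] by blast
      qed
      have lm: "l < m" "Suc l < m" using Suc.prems m2 by auto
      have "vs ! l \<in> orbit j x" using vs(4) c lm by (metis snd_conv)
      moreover have "vs ! Suc l \<in> orbit j x" using vs(5) c lm by (metis snd_conv diff_Suc_1 zero_less_Suc)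
      ultimately have "lastnz (vs ! Suc l) = lastnz (vs ! l)"
        using lastnz_same[of j "vs ! Suc l" x "vs ! l"] c nzl[of l] nzl[of "Suc l"] Suc.prems m2 by auto
      then show ?case using Suc by auto
    qed
    obtain j x where c: "cs ! (m - 2) = (j, orbit j x)" "j \<in> {1..p}" "x \<in> verts p n"
      using cycles_form[OF cyc[of "m - 2"]] m2 by auto
    have mm: "m - 2 < m" "0 < m - 1" "m - 1 < m" "m - 1 - 1 = m - 2" using m2 by auto
    have "vs ! (m - 2) \<in> orbit j x" using vs(4) c mm by (metis snd_conv)
    moreover have "Z \<in> orbit j x" using vs(5) c mm H by (metis snd_conv)
    ultimately have "lastnz (vs ! (m - 2)) = j"
      using lastnz_zero_orbit[of j "vs ! (m - 2)" x n] c nzl[of "m - 2"] m2 Z_def by auto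
    then have "j = i" using chain[of "m - 2"] by simp
    then have "cs ! (m - 2) = Ccyc n i"
      using zero_orbit[of i n x] c \<open>Z \<in> orbit j x\<close> Z_def unfolding verts_def Ccyc_def by auto
    moreover have "m - 2 \<noteq> m - 1" using m2 by arith
    ultimately show False using dcs'[of "m - 2" "m - 1"] lastc mm by auto
  qed
  have cbC: "cbase (Ccyc n i) = Z"
  proof (rule cbase_eq)
    show "Ccyc n i \<in> cycles p n" using cyc[of "m - 1"] lastc m0 by auto
    show "Z \<in> snd (Ccyc n i)" unfolding Z_def Ccyc_def by auto
    show "set (pfx (fst (Ccyc n i)) Z) \<subseteq> {0}"
      unfolding Z_def pfx_def by (auto dest: set_takeWhileD)
  qed
  have Alast: "cs ! (m - 1) = pc (vs ! (m - 1))"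
    using dichotomy[OF cyc[of "m - 1"], of "vs ! (m - 1)"] vs(4) m0 lastc cbC notZ by auto
  have stepB: "vs ! l = cbase (cs ! (l - 1))" if hl: "0 < l" "l < m" "cs ! l = pc (vs ! l)" for l
  proof -
    have h1: "l - 1 < m" "l \<noteq> l - 1" using hl by auto
    have h2: "vs ! l \<in> snd (cs ! (l - 1))" using vs(5) hl by auto
    show ?thesis using dichotomy[OF cyc[OF h1(1)] h2] dcs'[OF hl(2) h1(1) h1(2)] hl(3) by auto
  qed
  have stepA: "cs ! (l - 1) = pc (vs ! (l - 1))" if hl: "0 < l" "l < m" "cs ! l = pc (vs ! l)" for l
  proof -
    have b: "vs ! l = cbase (cs ! (l - 1))" using stepB hl by blast
    have h1: "l - 1 < m" "l - 1 \<noteq> l" using hl by auto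
    have h2: "vs ! (l - 1) \<in> snd (cs ! (l - 1))" using vs(4) h1 by auto
    show ?thesis
      using dichotomy[OF cyc[OF h1(1)] h2] b dvs[OF h1(1) hl(2) h1(2)] by auto
  qed
  have Ad: "cs ! (m - 1 - d) = pc (vs ! (m - 1 - d))" if "d < m" for d
    using that
  proof (induction d)
    case 0 then show ?case using Alast by simp
  next
    case (Suc d)
    have h: "0 < m - 1 - d" "m - 1 - d < m" using Suc.prems by auto
    have ih: "cs ! (m - 1 - d) = pc (vs ! (m - 1 - d))" using Suc.IH Suc.prems by linarith
    have eq: "m - 1 - d - 1 = m - 1 - Suc d" by arith
    show ?case using stepA[OF h ih] unfolding eq .
  qed
  have A: "cs ! l = pc (vs ! l)" if "l < m" for l
    using Ad[of "m - 1 - l"] that by auto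
  show ?thesis
    using vs A stepB m_def by (intro exI[of _ vs]) auto
qed

lemma chain_eq:
  assumes "\<forall>l<length cs. cs ! l = pc (vs ! l)" "\<forall>l. 0 < l \<and> l < length cs \<longrightarrow> vs ! l = cbase (cs ! (l - 1))"
    "\<forall>l<length cs'. cs' ! l = pc (vs' ! l)" "\<forall>l. 0 < l \<and> l < length cs' \<longrightarrow> vs' ! l = cbase (cs' ! (l - 1))"
    "vs ! 0 = vs' ! 0"
  shows "l < length cs \<Longrightarrow> l < length cs' \<Longrightarrow> cs ! l = cs' ! l \<and> vs ! l = vs' ! l"
proof (induction l)
  case 0 then show ?case using assms by auto
next
  case (Suc l)
  then have "vs ! Suc l = vs' ! Suc l" using assms(2,4) by auto
  then show ?case using assms(1,3) Suc.prems by auto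
qed

lemma path_unique:
  assumes "\<exists>i\<in>{1..p}. u \<in> petal p n i \<and> is_cycle_path p n u cs (Ccyc n i)"
      and "\<exists>i\<in>{1..p}. u \<in> petal p n i \<and> is_cycle_path p n u cs' (Ccyc n i)"
  shows "cs = cs'"
proof -
  obtain i where i: "i \<in> {1..p}" "u \<in> petal p n i" "is_cycle_path p n u cs (Ccyc n i)" using assms(1) by blast
  obtain i' where i': "i' \<in> {1..p}" "u \<in> petal p n i'" "is_cycle_path p n u cs' (Ccyc n i')" using assms(2) by blast
  have "i' = i" using petal_lastnz[OF i(2,1)] petal_lastnz[OF i'(2,1)] by simp
  obtain vs where vs: "length vs = length cs" "vs ! 0 = u" "\<forall>l<length cs. cs ! l = pc (vs ! l)"
      "\<forall>l. 0 < l \<and> l < length cs \<longrightarrow> vs ! l = cbase (cs ! (l - 1))"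
    using allup[OF i(3,2,1)] by blast
  obtain vs' where vs': "length vs' = length cs'" "vs' ! 0 = u" "\<forall>l<length cs'. cs' ! l = pc (vs' ! l)"
      "\<forall>l. 0 < l \<and> l < length cs' \<longrightarrow> vs' ! l = cbase (cs' ! (l - 1))"
    using allup[OF i'(3,2,1)] by blast
  have ce: "cs ! l = cs' ! l" if "l < length cs" "l < length cs'" for l
    using chain_eq[of cs vs cs' vs' l] vs vs' that by auto
  have P1: "cs \<noteq> [] \<and> last cs = Ccyc n i \<and> distinct cs" using i(3) unfolding is_cycle_path_def by auto
  have P2: "cs' \<noteq> [] \<and> last cs' = Ccyc n i \<and> distinct cs'" using i'(3) \<open>i' = i\<close> unfolding is_cycle_path_def by auto
  have short: False if "length a < length b" "a \<noteq> []" "last a = Ccyc n i" "distinct b" "last b = Ccyc n i" "b \<noteq> []"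
      "\<forall>l. l < length a \<longrightarrow> l < length b \<longrightarrow> a ! l = b ! l" for a b :: "(nat \<times> nat list set) list"
  proof -
    have e1: "b ! (length a - 1) = Ccyc n i" using that by (simp add: last_conv_nth)
    have e2: "b ! (length b - 1) = Ccyc n i" using that by (simp add: last_conv_nth)
    have "length a - 1 < length b" "length b - 1 < length b" using that by auto
    then have "length a - 1 = length b - 1" using that(4) e1 e2 nth_eq_iff_index_eq[of b "length a - 1" "length b - 1"] by auto
    then show False using that(1,2) by (cases a) auto
  qed
  have "length cs = length cs'"
    using short[of cs cs'] short[of cs' cs] P1 P2 ce by (metis linorder_neqE_nat)
  then show ?thesis using ce by (simp add: nth_equalityI)
qed




lemma orbit_reach:
  assumes j: "j \<in> {1..p}" and x: "x \<in> verts p n" and v: "v \<in> orbit j x" and v': "v' \<in> orbit j x"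
    and nz: "\<forall>y\<in>orbit j x. y \<noteq> replicate n 0"
  shows "(v, v') \<in> {(v, w). ((v, w) \<in> gedges p n \<or> (w, v) \<in> gedges p n) \<and> v \<noteq> replicate n 0 \<and> w \<noteq> replicate n 0}\<^sup>*"
    (is "_ \<in> ?E\<^sup>*")
proof -
  have j0: "j \<noteq> 0" using j by auto
  have ov: "orbit j v = orbit j x" using orbit_same[OF j0 v] .
  obtain m where m: "v' = (act j ^^ m) v" using v' ov unfolding orbit_def by auto
  have inorb: "(act j ^^ i) v \<in> orbit j x" for i using ov unfolding orbit_def by auto
  have vv: "(act j ^^ i) v \<in> verts p n" for i using orbit_verts[OF x] inorb j by auto
  have "(v, (act j ^^ i) v) \<in> ?E\<^sup>*" for i
  proof (induction i)
    case 0 then show ?case by simp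
  next
    case (Suc i)
    have "((act j ^^ i) v, act j ((act j ^^ i) v)) \<in> gedges p n"
      unfolding gedges_def using vv[of i] j by blast
    then have g: "((act j ^^ i) v, (act j ^^ Suc i) v) \<in> gedges p n" by simp
    have n1: "(act j ^^ i) v \<noteq> replicate n 0" using nz inorb[of i] by blast
    have n2: "(act j ^^ Suc i) v \<noteq> replicate n 0" using nz inorb[of "Suc i"] by blast
    have "((act j ^^ i) v, (act j ^^ Suc i) v) \<in> ?E"
      using g n1 n2 by blast
    then show ?case by (rule rtrancl_into_rtrancl[OF Suc.IH])
  qed
  then show ?thesis using m by simp
qed

context
  fixes p n k t :: nat and u :: "nat list" and a :: "nat list" and us :: "nat list list"
  assumes p1: "p \<ge> 1" and n1: "n \<ge> 1"
    and uv: "u \<in> verts p n" and unz: "u \<noteq> replicate n 0"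
    and la: "length a = t" and lus: "length us = t"
    and ar: "\<forall>j<t. a ! j \<in> {1..p}"
    and adj: "\<forall>j. j + 1 < t \<longrightarrow> a ! (j + 1) \<noteq> a ! j"
    and uss: "\<forall>j<t. set (us ! j) \<subseteq> {0, a ! j}"
    and ud: "u = replicate k 0 @ concat (map (\<lambda>j. a ! j # us ! j) [0..<t])"
begin

lemma nzrep: "b \<noteq> 0 \<Longrightarrow> w @ b # s \<noteq> replicate n 0"
proof
  assume b: "b \<noteq> 0" and e: "w @ b # s = replicate n 0"
  have "b \<in> set (w @ b # s)" by simp
  then have "b \<in> set (replicate n 0)" using e by metis
  then show False using b by simp
qed

lemma rep0: "set (replicate m (0::nat)) \<subseteq> {0, j}"
  by (induction m) auto

lemma lz_app: "b \<noteq> 0 \<Longrightarrow> length (takeWhile (\<lambda>x. x = 0) (replicate m 0 @ b # s)) = m"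
  by (induction m) auto

definition "RR j = concat (map (\<lambda>l. a ! l # us ! l) [j + 1..<t])"
definition "NN j = k + (j + 1) + (\<Sum>l\<le>j. length (us ! l))"
definition "SS j = {w @ RR j | w. length w = NN j \<and> set w \<subseteq> {0, a ! j}}"
definition "VV l = (if l = 0 then u else replicate (NN (l - 1)) 0 @ RR (l - 1))"

lemma t1: "t \<ge> 1"
proof (rule ccontr)
  assume "\<not> t \<ge> 1"
  then have "u = replicate k 0" using ud by simp
  then show False using uv unz unfolding verts_def by auto
qed

lemma R_step: "j + 1 < t \<Longrightarrow> RR j = a ! (j + 1) # us ! (j + 1) @ RR (j + 1)"
  unfolding RR_def by (simp add: upt_conv_Cons)

lemma R_last: "RR (t - 1) = []"
  unfolding RR_def using t1 by simp

lemma u_dec: "u = (replicate k 0 @ a ! 0 # us ! 0) @ RR 0"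
  using ud t1 unfolding RR_def by (simp add: upt_conv_Cons)

lemma N_0: "NN 0 = k + 1 + length (us ! 0)"
  unfolding NN_def by simp

lemma N_Suc: "NN (Suc j) = NN j + 1 + length (us ! Suc j)"
  unfolding NN_def by simp

lemma N_mono: "j < j' \<Longrightarrow> NN j < NN j'"
proof -
  have "strict_mono NN" by (rule strict_mono_Suc_iff[THEN iffD2]) (simp add: N_Suc)
  then show "j < j' \<Longrightarrow> NN j < NN j'" by (rule strict_monoD)
qed

lemma N_pos: "NN j \<ge> 1"
  unfolding NN_def by simp

lemma lenR: "j < t \<Longrightarrow> NN j + length (RR j) = n"
proof (induction j)
  case 0
  then show ?case using u_dec uv N_0 unfolding verts_def by simp
next
  case (Suc j)
  then show ?case using R_step[of j] N_Suc[of j] by simp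
qed

lemma sufR: "j < t \<Longrightarrow> \<exists>X. u = X @ RR j"
proof (induction j)
  case 0 then show ?case using u_dec by blast
next
  case (Suc j)
  then obtain X where "u = X @ RR j" by auto
  then show ?case using R_step[of j] Suc.prems by (intro exI[of _ "X @ a ! Suc j # us ! Suc j"]) simp
qed

lemma setR: "j < t \<Longrightarrow> set (RR j) \<subseteq> {0..p}"
  using sufR uv unfolding verts_def by fastforce

lemma a_ok: "j < t \<Longrightarrow> a ! j \<noteq> 0 \<and> a ! j \<le> p"
  using ar by auto

lemma stpR: "j < t \<Longrightarrow> stp (a ! j) (RR j)"
proof (cases "j + 1 < t")
  case True
  then show ?thesis using R_step[OF True] a_ok[of "j+1"] adj unfolding stp_def by auto
next
  case False
  assume "j < t"
  then have "j = t - 1" using False by auto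
  then show ?thesis using R_last unfolding stp_def by simp
qed

lemma S_orbit: "j < t \<Longrightarrow> SS j = orbit (a ! j) (replicate (NN j) 0 @ RR j)"
proof -
  assume jt: "j < t"
  have "pfx (a ! j) (replicate (NN j) 0 @ RR j) = replicate (NN j) 0 \<and> sfx (a ! j) (replicate (NN j) 0 @ RR j) = RR j"
    using pfx_sfx_app[OF rep0 stpR[OF jt]] by blast
  then show ?thesis using orbit_char[of "a ! j"] a_ok[OF jt] unfolding SS_def by simp
qed

lemma base_verts: "j < t \<Longrightarrow> replicate (NN j) 0 @ RR j \<in> verts p n"
  using lenR setR unfolding verts_def by auto

lemma card_S: "j < t \<Longrightarrow> card (SS j) = 2 ^ NN j"
proof -
  assume jt: "j < t"
  have "pfx (a ! j) (replicate (NN j) 0 @ RR j) = replicate (NN j) 0"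
    using pfx_sfx_app[OF rep0 stpR[OF jt]] by blast
  then show ?thesis using S_orbit[OF jt] card_orbit[of "a ! j"] a_ok[OF jt] by simp
qed

lemma cyc_S: "j < t \<Longrightarrow> (a ! j, SS j) \<in> cycles p n"
proof -
  assume jt: "j < t"
  have "(2::nat) ^ 1 \<le> 2 ^ NN j" using power_increasing[OF N_pos[of j], of "2::nat"] by simp
  then have c2: "card (orbit (a ! j) (replicate (NN j) 0 @ RR j)) \<ge> 2" using card_S[OF jt] S_orbit[OF jt] by simp
  have "\<exists>j' v. (a ! j, SS j) = (j', orbit j' v) \<and> j' \<in> {1..p} \<and> v \<in> verts p n \<and> card (orbit j' v) \<ge> 2"
    apply (rule exI[of _ "a ! j"], rule exI[of _ "replicate (NN j) 0 @ RR j"])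
    using S_orbit[OF jt] base_verts[OF jt] ar jt c2 by simp
  then show ?thesis unfolding cycles_def by blast
qed

lemma last_S: "(a ! (t - 1), SS (t - 1)) = Ccyc n (a ! (t - 1))"
proof -
  have "NN (t - 1) = n" using lenR[of "t - 1"] R_last t1 by simp
  then show ?thesis unfolding SS_def Ccyc_def using R_last by auto
qed

lemma N_last: "NN (t - 1) = n"
  using lenR[of "t - 1"] R_last t1 by simp

lemma V_in: "l < t \<Longrightarrow> VV l \<in> SS l"
proof (cases l)
  case 0
  then show ?thesis using u_dec N_0 uss t1 unfolding VV_def SS_def
    by (intro CollectI exI[of _ "replicate k 0 @ a ! 0 # us ! 0"]) auto
next
  case (Suc l')
  assume lt: "l < t"
  have "VV l = (replicate (NN l') 0 @ a ! l # us ! l) @ RR l"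
    using R_step[of l'] Suc lt unfolding VV_def by simp
  then show ?thesis using N_Suc[of l'] Suc lt uss unfolding SS_def
    by (intro CollectI exI[of _ "replicate (NN l') 0 @ a ! l # us ! l"]) auto
qed

lemma V_in2: "0 < l \<Longrightarrow> l < t \<Longrightarrow> VV l \<in> SS (l - 1)"
  unfolding VV_def SS_def by auto

lemma lz_V: "l < t \<Longrightarrow> length (takeWhile (\<lambda>x. x = 0) (VV l)) = (if l = 0 then k else NN (l - 1))"
proof (cases l)
  case 0
  then show ?thesis using u_dec a_ok[of 0] t1 lz_app[of "a ! 0" k] unfolding VV_def by simp
next
  case (Suc l')
  assume lt: "l < t"
  then show ?thesis using R_step[of l'] Suc a_ok[of l] lz_app[of "a ! l" "NN l'"] unfolding VV_def by simp
qed

lemma V_inj: "l < t \<Longrightarrow> l' < t \<Longrightarrow> VV l = VV l' \<Longrightarrow> l = l'"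
proof -
  assume h: "l < t" "l' < t" "VV l = VV l'"
  define g where "g l = (if l = 0 then k else NN (l - 1))" for l
  have Nle: "NN i \<le> NN j" if "i \<le> j" for i j using N_mono[of i j] that by (cases "i = j") auto
  have gm: "g i < g j" if hij: "i < j" for i j
  proof (cases "i = 0")
    case True
    then have "k < NN 0" "NN 0 \<le> NN (j - 1)" using N_0 Nle[of 0 "j - 1"] by auto
    then show ?thesis using True hij unfolding g_def by auto
  next
    case False
    then show ?thesis using N_mono[of "i - 1" "j - 1"] hij unfolding g_def by auto
  qed
  have "g l = g l'" using lz_V[OF h(1)] lz_V[OF h(2)] h(3) g_def by simp
  then show "l = l'" using gm by (metis less_irrefl linorder_neqE_nat)
qed

lemma S_nz: "l + 1 < t \<Longrightarrow> \<forall>y\<in>SS l. y \<noteq> replicate n 0"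
  using R_step[of l] a_ok[of "l + 1"] nzrep[of "a ! (l + 1)"] unfolding SS_def by auto

lemma canon_path:
  "is_cycle_path p n u (map (\<lambda>j. (a ! j, SS j)) [0..<t]) (Ccyc n (a ! (t - 1)))"
  unfolding is_cycle_path_def
proof (intro conjI)
  show "map (\<lambda>j. (a ! j, SS j)) [0..<t] \<noteq> []" using t1 by simp
  show "last (map (\<lambda>j. (a ! j, SS j)) [0..<t]) = Ccyc n (a ! (t - 1))"
    using t1 last_S by (simp add: last_map)
  show "distinct (map (\<lambda>j. (a ! j, SS j)) [0..<t])"
  proof (subst distinct_map, intro conjI inj_onI)
    show "distinct [0..<t]" by simp
    fix x y assume "x \<in> set [0..<t]" "y \<in> set [0..<t]" "(a ! x, SS x) = (a ! y, SS y)"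
    then have xy: "x < t" "y < t" "card (SS x) = card (SS y)" by auto
    then have "(2::nat) ^ NN x = 2 ^ NN y" using card_S by metis
    then have "NN x = NN y" by simp
    then show "x = y" using N_mono by (metis less_irrefl linorder_neqE_nat)
  qed
  show "set (map (\<lambda>j. (a ! j, SS j)) [0..<t]) \<subseteq> cycles p n" using cyc_S by auto
  show "\<exists>vs. length vs = length (map (\<lambda>j. (a ! j, SS j)) [0..<t]) \<and> distinct vs \<and> vs ! 0 = u \<and>
      (\<forall>l<length (map (\<lambda>j. (a ! j, SS j)) [0..<t]). vs ! l \<in> snd (map (\<lambda>j. (a ! j, SS j)) [0..<t] ! l)) \<and>
      (\<forall>l. 0 < l \<and> l < length (map (\<lambda>j. (a ! j, SS j)) [0..<t]) \<longrightarrow>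
           vs ! l \<in> snd (map (\<lambda>j. (a ! j, SS j)) [0..<t] ! (l - 1)))"
  proof -
    have d: "distinct (map VV [0..<t])" using V_inj by (simp add: distinct_map inj_on_def)
    have z: "map VV [0..<t] ! 0 = u" using t1 unfolding VV_def by simp
    have i1: "\<forall>l<length (map (\<lambda>j. (a ! j, SS j)) [0..<t]). map VV [0..<t] ! l \<in> snd (map (\<lambda>j. (a ! j, SS j)) [0..<t] ! l)"
    proof (intro allI impI)
      fix l assume h: "l < length (map (\<lambda>j. (a ! j, SS j)) [0..<t])"
      then have lt: "l < t" by simp
      then have e1: "map VV [0..<t] ! l = VV l" and e2: "map (\<lambda>j. (a ! j, SS j)) [0..<t] ! l = (a ! l, SS l)"
        by (simp_all del: upt_Suc)
      show "map VV [0..<t] ! l \<in> snd (map (\<lambda>j. (a ! j, SS j)) [0..<t] ! l)"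
        unfolding e1 e2 snd_conv using V_in[OF lt] .
    qed
    have i2: "\<forall>l. 0 < l \<and> l < length (map (\<lambda>j. (a ! j, SS j)) [0..<t]) \<longrightarrow>
           map VV [0..<t] ! l \<in> snd (map (\<lambda>j. (a ! j, SS j)) [0..<t] ! (l - 1))"
    proof (intro allI impI)
      fix l assume h: "0 < l \<and> l < length (map (\<lambda>j. (a ! j, SS j)) [0..<t])"
      then have "l - 1 < t" "l < t" by auto
      then have e1: "map VV [0..<t] ! l = VV l" and e2: "map (\<lambda>j. (a ! j, SS j)) [0..<t] ! (l - 1) = (a ! (l - 1), SS (l - 1))"
        by (simp_all del: upt_Suc)
      show "map VV [0..<t] ! l \<in> snd (map (\<lambda>j. (a ! j, SS j)) [0..<t] ! (l - 1))"
        unfolding e1 e2 snd_conv using V_in2[of l] h by simp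
    qed
    have l: "length (map VV [0..<t]) = length (map (\<lambda>j. (a ! j, SS j)) [0..<t])" by simp
    show ?thesis using d z i1 i2 l by blast
  qed
qed

lemma canon_petal: "u \<in> petal p n (a ! (t - 1))"
proof -
  define E where "E = {(v, w). ((v, w) \<in> gedges p n \<or> (w, v) \<in> gedges p n) \<and> v \<noteq> replicate n 0 \<and> w \<noteq> replicate n 0}"
  have step: "(VV l, VV (Suc l)) \<in> E\<^sup>*" if "Suc l < t" for l
  proof -
    have lt: "l < t" using that by simp
    have so: "SS l = orbit (a ! l) (replicate (NN l) 0 @ RR l)" using S_orbit lt by simp
    have j: "a ! l \<in> {1..p}" using ar lt by blast
    have x: "replicate (NN l) 0 @ RR l \<in> verts p n" using base_verts lt by blast
    have v: "VV l \<in> orbit (a ! l) (replicate (NN l) 0 @ RR l)" using V_in[OF lt] so by simp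
    have v': "VV (Suc l) \<in> orbit (a ! l) (replicate (NN l) 0 @ RR l)" using V_in2[of "Suc l"] that so by simp
    have nz: "\<forall>y\<in>orbit (a ! l) (replicate (NN l) 0 @ RR l). y \<noteq> replicate n 0"
      using S_nz[of l] that so by simp
    show ?thesis using orbit_reach[OF j x v v' nz] unfolding E_def .
  qed
  have reach: "(VV 0, VV l) \<in> E\<^sup>*" if "l < t" for l
    using that
  proof (induction l)
    case 0 then show ?case by simp
  next
    case (Suc l) then show ?case using step[of l] by (meson Suc_lessD rtrancl_trans)
  qed
  have "VV (t - 1) \<in> snd (Ccyc n (a ! (t - 1)))" using V_in[of "t - 1"] last_S t1 by (metis diff_less less_numeral_extra(1) snd_conv le_less_trans less_le_trans zero_less_one)
  moreover have "VV (t - 1) \<noteq> replicate n 0"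
  proof (cases "t - 1")
    case 0 then show ?thesis using unz unfolding VV_def by simp
  next
    case (Suc l)
    then show ?thesis using R_step[of l] a_ok[of "t - 1"] nzrep[of "a ! (t - 1)"] unfolding VV_def by auto
  qed
  moreover have "(u, VV (t - 1)) \<in> E\<^sup>*" using reach[of "t - 1"] t1 unfolding VV_def by simp
  ultimately have "\<exists>w\<in>snd (Ccyc n (a ! (t - 1))) - {replicate n 0}. (u, w) \<in> E\<^sup>*" by blast
  then show ?thesis unfolding petal_def Let_def E_def[symmetric] using uv unz by simp
qed

end



theorem lemma4p11:
  fixes p n k t :: nat and u :: "nat list" and a :: "nat list" and us :: "nat list list"
  assumes "p \<ge> 1" and "n \<ge> 1"
    and "u \<in> verts p n" and "u \<noteq> replicate n 0"
    and "length a = t" and "length us = t"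
    and "\<forall>j<t. a ! j \<in> {1..p}"
    and "\<forall>j. j + 1 < t \<longrightarrow> a ! (j + 1) \<noteq> a ! j"
    and "\<forall>j<t. set (us ! j) \<subseteq> {0, a ! j}"
    and "u = replicate k 0 @ concat (map (\<lambda>j. a ! j # us ! j) [0..<t])"
  shows "let P = path_of_cycles p n u;
             N = (\<lambda>j. k + (j + 1) + (\<Sum>l\<le>j. length (us ! l)));
             rest = (\<lambda>j. concat (map (\<lambda>l. a ! l # us ! l) [j + 1..<t]))
         in length P = t
          \<and> (\<forall>j<t. P ! j = (a ! j, {w @ rest j | w. length w = N j \<and> set w \<subseteq> {0, a ! j}}))
          \<and> last P = Ccyc n (a ! (t - 1))
          \<and> map cyc_len P = map (\<lambda>j. 2 ^ N j) [0..<t]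
          \<and> (2::nat) ^ N (t - 1) = 2 ^ n"
proof -

  define N where "N = (\<lambda>j. k + (j + 1) + (\<Sum>l\<le>j. length (us ! l)))"
  define rest where "rest = (\<lambda>j. concat (map (\<lambda>l. a ! l # us ! l) [j + 1..<t]))"
  define S where "S = (\<lambda>j. {w @ rest j | w. length w = N j \<and> set w \<subseteq> {0, a ! j}})"
  define cs0 where "cs0 = map (\<lambda>j. (a ! j, S j)) [0..<t]"
  have SSe: "SS k t a us j = S j" for j
    by (simp add: SS_def[OF assms] RR_def[OF assms] NN_def[OF assms] S_def rest_def N_def)
  have NNe: "NN k us j = N j" for j unfolding NN_def[OF assms] N_def by simp
  have cp: "is_cycle_path p n u cs0 (Ccyc n (a ! (t - 1)))"
    using canon_path[OF assms] unfolding cs0_def SSe .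
  have pt: "u \<in> petal p n (a ! (t - 1))" using canon_petal[OF assms] .
  have t1: "t \<ge> 1" using t1[OF assms] .
  have at: "a ! (t - 1) \<in> {1..p}" using assms(7) t1 by simp
  have P: "path_of_cycles p n u = cs0"
    unfolding path_of_cycles_def
  proof (rule the_equality)
    show "\<exists>i\<in>{1..p}. u \<in> petal p n i \<and> is_cycle_path p n u cs0 (Ccyc n i)"
      using at pt cp by blast
    fix cs assume "\<exists>i\<in>{1..p}. u \<in> petal p n i \<and> is_cycle_path p n u cs (Ccyc n i)"
    then show "cs = cs0" using path_unique at pt cp by blast
  qed
  have cS: "card (S j) = 2 ^ N j" if "j < t" for j
    using card_S[OF assms that] unfolding SSe NNe .
  have lS: "(a ! (t - 1), S (t - 1)) = Ccyc n (a ! (t - 1))"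
    using last_S[OF assms] unfolding SSe .
  have NL: "N (t - 1) = n" using N_last[OF assms] unfolding NNe .
  have l1: "length cs0 = t" unfolding cs0_def by simp
  have l2: "\<forall>j<t. cs0 ! j = (a ! j, S j)" unfolding cs0_def by simp
  have l3: "last cs0 = Ccyc n (a ! (t - 1))" unfolding cs0_def using t1 lS by (simp add: last_map)
  have l4: "map cyc_len cs0 = map (\<lambda>j. 2 ^ N j) [0..<t]"
    unfolding cs0_def cyc_len_def using cS by simp
  show ?thesis unfolding Let_def P N_def[symmetric] rest_def[symmetric]
    using l1 l2 l3 l4 NL unfolding S_def by simp
qed


end
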